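(* Let $F$ be a graph. (i) If every edge of $F$ lies in a cycle of $F$ of length at most $m+1$, then $\mathrm{rsat}(n,F)=\Omega(n^{1+1/m})$. (ii) If for every edge $e$ of $F$ the graph $F\setminus e$ has diameter at most $r$, then $\mathrm{rsat}(n,F)=\Omega(n^{1+1/r})$. (iii) If $F$ is connected, then there exists a constant $c=c_F$ such that $\liminf_{n\to\infty}\mathrm{rsat}(n,F)/n\le c$ if and only if $F$ contains a cut edge.
   Context: All graphs are finite and simple. For a graph $F$, a graph $G$ is $F$-saturated if $G$ contains no copy of $F$, but adding any edge between two non-adjacent vertices of $G$ creates a copy of $F$. A graph is regular if all vertices have the same degree. $\mathrm{rsat}(n,F)$ denotes the smallest number of edges of a regular $n$-vertex $F$-saturated graph, defined only for those $n$ for which such a graph exists; the asymptotic statements ($\Omega$, $\liminf$) are over those $n$ for which $\mathrm{rsat}(n,F)$ is defined. For an edge $e$ of $F$, $F\setminus e$ is the graph on the vertex set of $F$ with edge set $E(F)\setminus\{e\}$. A cut edge is an edge whose removal increases the number of connected components. *)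

theory Defs
  imports Complex_Main "HOL-Library.Landau_Symbols" "HOL-Library.Extended_Nat"
    "HOL-Library.Extended_Real" "HOL-Library.Liminf_Limsup"
begin

definition graph :: "'a set \<Rightarrow> 'a set set \<Rightarrow> bool" where
  "graph V E \<longleftrightarrow> finite V \<and> (\<forall>e\<in>E. \<exists>u v. e = {u, v} \<and> u \<noteq> v \<and> u \<in> V \<and> v \<in> V)"

definition contains_copy :: "'a set \<Rightarrow> 'a set set \<Rightarrow> 'b set \<Rightarrow> 'b set set \<Rightarrow> bool" where
  "contains_copy V E VF EF \<longleftrightarrow>
     (\<exists>f. inj_on f VF \<and> f ` VF \<subseteq> V \<and> (\<forall>u v. {u, v} \<in> EF \<longrightarrow> {f u, f v} \<in> E))"

definition saturated :: "'a set \<Rightarrow> 'a set set \<Rightarrow> 'b set \<Rightarrow> 'b set set \<Rightarrow> bool" where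
  "saturated V E VF EF \<longleftrightarrow> \<not> contains_copy V E VF EF \<and>
     (\<forall>u\<in>V. \<forall>v\<in>V. u \<noteq> v \<and> {u, v} \<notin> E \<longrightarrow> contains_copy V (insert {u, v} E) VF EF)"

definition degree :: "'a set \<Rightarrow> 'a set set \<Rightarrow> 'a \<Rightarrow> nat" where
  "degree V E v = card {u \<in> V. {u, v} \<in> E}"

definition regular :: "'a set \<Rightarrow> 'a set set \<Rightarrow> bool" where
  "regular V E \<longleftrightarrow> (\<exists>d. \<forall>v\<in>V. degree V E v = d)"

text \<open>n-vertex graphs are taken on the vertex set {0..<n} (up to isomorphism this is all of them).\<close>
definition rsat_graphs :: "nat \<Rightarrow> 'b set \<Rightarrow> 'b set set \<Rightarrow> nat set set set" where
  "rsat_graphs n VF EF = {E. graph {0..<n} E \<and> regular {0..<n} E \<and> saturated {0..<n} E VF EF}"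

definition rsat_defined :: "nat \<Rightarrow> 'b set \<Rightarrow> 'b set set \<Rightarrow> bool" where
  "rsat_defined n VF EF \<longleftrightarrow> rsat_graphs n VF EF \<noteq> {}"

definition rsat :: "nat \<Rightarrow> 'b set \<Rightarrow> 'b set set \<Rightarrow> nat" where
  "rsat n VF EF = Inf (card ` rsat_graphs n VF EF)"

definition rsat_filter :: "'b set \<Rightarrow> 'b set set \<Rightarrow> nat filter" where
  "rsat_filter VF EF = inf sequentially (principal {n. rsat_defined n VF EF})"

definition walk :: "'a set \<Rightarrow> 'a set set \<Rightarrow> 'a list \<Rightarrow> bool" where
  "walk V E xs \<longleftrightarrow> xs \<noteq> [] \<and> set xs \<subseteq> V \<and>
     (\<forall>i. i + 1 < length xs \<longrightarrow> {xs ! i, xs ! (i + 1)} \<in> E)"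

definition reachable :: "'a set \<Rightarrow> 'a set set \<Rightarrow> 'a \<Rightarrow> 'a \<Rightarrow> bool" where
  "reachable V E u v \<longleftrightarrow> (\<exists>xs. walk V E xs \<and> hd xs = u \<and> last xs = v)"

definition dist :: "'a set \<Rightarrow> 'a set set \<Rightarrow> 'a \<Rightarrow> 'a \<Rightarrow> enat" where
  "dist V E u v = (INF xs \<in> {xs. walk V E xs \<and> hd xs = u \<and> last xs = v}. enat (length xs - 1))"

definition diameter :: "'a set \<Rightarrow> 'a set set \<Rightarrow> enat" where
  "diameter V E = (SUP u \<in> V. SUP v \<in> V. dist V E u v)"

definition connected_graph :: "'a set \<Rightarrow> 'a set set \<Rightarrow> bool" where
  "connected_graph V E \<longleftrightarrow> (\<forall>u\<in>V. \<forall>v\<in>V. reachable V E u v)"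

definition components :: "'a set \<Rightarrow> 'a set set \<Rightarrow> 'a set set" where
  "components V E = V // {(u, v). u \<in> V \<and> v \<in> V \<and> reachable V E u v}"

definition cut_edge :: "'a set \<Rightarrow> 'a set set \<Rightarrow> 'a set \<Rightarrow> bool" where
  "cut_edge V E e \<longleftrightarrow> e \<in> E \<and> card (components V (E - {e})) > card (components V E)"

definition in_cycle_of_length :: "'a set set \<Rightarrow> 'a set \<Rightarrow> nat \<Rightarrow> bool" where
  "in_cycle_of_length E e k \<longleftrightarrow> (\<exists>xs. length xs = k \<and> k \<ge> 3 \<and> distinct xs \<and>
     (\<forall>i<k. {xs ! i, xs ! ((i + 1) mod k)} \<in> E) \<and>
     (\<exists>i<k. e = {xs ! i, xs ! ((i + 1) mod k)}))"

end

theory Submission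
  imports Defs
begin

lemma walk_single: "walk V E [x] \<longleftrightarrow> x \<in> V"
  by (auto simp: walk_def)

lemma walk_Cons2: "walk V E (x # y # xs) \<longleftrightarrow> x \<in> V \<and> {x, y} \<in> E \<and> walk V E (y # xs)"
proof
  assume w: "walk V E (x # y # xs)"
  have "{(x#y#xs) ! 0, (x#y#xs) ! (0+1)} \<in> E" using w unfolding walk_def by (metis length_Cons add_less_cancel_right zero_less_Suc One_nat_def add.commute plus_1_eq_Suc)
  moreover have "\<forall>i. i + 1 < length (y # xs) \<longrightarrow> {(y#xs) ! i, (y#xs) ! (i + 1)} \<in> E"
  proof (intro allI impI)
    fix i assume "i + 1 < length (y # xs)"
    then have "Suc i + 1 < length (x#y#xs)" by simp
    then have "{(x#y#xs) ! Suc i, (x#y#xs) ! (Suc i + 1)} \<in> E" using w unfolding walk_def by blast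
    then show "{(y#xs) ! i, (y#xs) ! (i + 1)} \<in> E" by simp
  qed
  ultimately show "x \<in> V \<and> {x, y} \<in> E \<and> walk V E (y # xs)" using w unfolding walk_def by auto
next
  assume h: "x \<in> V \<and> {x, y} \<in> E \<and> walk V E (y # xs)"
  show "walk V E (x # y # xs)" unfolding walk_def
  proof (intro conjI allI impI)
    show "set (x # y # xs) \<subseteq> V" using h unfolding walk_def by auto
    fix i assume i: "i + 1 < length (x # y # xs)"
    show "{(x # y # xs) ! i, (x # y # xs) ! (i + 1)} \<in> E"
    proof (cases i)
      case 0 then show ?thesis using h by simp
    next
      case (Suc j)
      then have "j + 1 < length (y # xs)" using i by simp
      then have "{(y#xs) ! j, (y#xs) ! (j + 1)} \<in> E" using h unfolding walk_def by blast
      then show ?thesis using Suc by simp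
    qed
  qed simp
qed

definition adj :: "'a set \<Rightarrow> 'a set set \<Rightarrow> 'a \<Rightarrow> 'a \<Rightarrow> bool" where
  "adj V E x y \<longleftrightarrow> x \<in> V \<and> y \<in> V \<and> {x, y} \<in> E"

lemma walk_rtranclp: "walk V E xs \<Longrightarrow> (adj V E)\<^sup>*\<^sup>* (hd xs) (last xs)"
proof (induction xs)
  case Nil then show ?case by (simp add: walk_def)
next
  case (Cons x xs)
  show ?case
  proof (cases xs)
    case Nil then show ?thesis by simp
  next
    case (Cons y ys)
    have "x \<in> V" "{x,y} \<in> E" "walk V E (y # ys)" using Cons.prems walk_Cons2 Cons by (metis)+
    moreover have "y \<in> V" using \<open>walk V E (y # ys)\<close> by (simp add: walk_def)
    ultimately have "adj V E x y" by (simp add: adj_def)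
    moreover have "(adj V E)\<^sup>*\<^sup>* y (last xs)" using Cons.IH Cons \<open>walk V E (y # ys)\<close> by simp
    ultimately show ?thesis using Cons by (simp add: converse_rtranclp_into_rtranclp)
  qed
qed

lemma rtranclp_walk: "(adj V E)\<^sup>*\<^sup>* u v \<Longrightarrow> u \<in> V \<Longrightarrow> \<exists>xs. walk V E xs \<and> hd xs = u \<and> last xs = v"
proof (induction rule: converse_rtranclp_induct)
  case base then show ?case by (intro exI[of _ "[v]"]) (simp add: walk_single)
next
  case (step y z)
  then have "z \<in> V" "{y,z} \<in> E" "y \<in> V" by (auto simp: adj_def)
  then obtain xs where xs: "walk V E xs" "hd xs = z" "last xs = v" using step by blast
  then obtain ys where "xs = z # ys" by (cases xs) (auto simp: walk_def)
  then show ?case using xs \<open>{y,z} \<in> E\<close> \<open>y \<in> V\<close> by (intro exI[of _ "y # xs"]) (auto simp: walk_Cons2)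
qed

lemma reachable_iff: "reachable V E u v \<longleftrightarrow> u \<in> V \<and> (adj V E)\<^sup>*\<^sup>* u v"
proof
  assume "reachable V E u v"
  then obtain xs where "walk V E xs" "hd xs = u" "last xs = v" by (auto simp: reachable_def)
  then show "u \<in> V \<and> (adj V E)\<^sup>*\<^sup>* u v" using walk_rtranclp[of V E xs]
    by (cases xs) (auto simp: walk_def)
next
  assume "u \<in> V \<and> (adj V E)\<^sup>*\<^sup>* u v"
  then show "reachable V E u v" using rtranclp_walk by (fastforce simp: reachable_def)
qed

lemma walk_rev: "walk V E xs \<Longrightarrow> walk V E (rev xs)"
proof (induction xs rule: induct_list012)
  case 1 then show ?case by simp
next
  case (2 x) then show ?case by simp
next
  case (3 x y zs)
  then have a: "x \<in> V" "{x,y} \<in> E" "walk V E (y # zs)" by (auto simp: walk_Cons2)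
  then have r: "walk V E (rev zs @ [y])" using 3 by simp
  have "walk V E (rev zs @ [y, x])"
    unfolding walk_def
  proof (intro conjI allI impI)
    show "set (rev zs @ [y, x]) \<subseteq> V" using r a by (auto simp: walk_def)
    fix i assume i: "i + 1 < length (rev zs @ [y, x])"
    show "{(rev zs @ [y, x]) ! i, (rev zs @ [y, x]) ! (i + 1)} \<in> E"
    proof (cases "i + 1 < length (rev zs @ [y])")
      case True
      then have "{(rev zs @ [y]) ! i, (rev zs @ [y]) ! (i + 1)} \<in> E" using r by (auto simp: walk_def)
      moreover have "(rev zs @ [y, x]) ! i = (rev zs @ [y]) ! i" "(rev zs @ [y, x]) ! (i+1) = (rev zs @ [y]) ! (i+1)"
        using True by (auto simp: nth_append)
      ultimately show ?thesis by simp
    next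
      case False
      then have "i = length zs" using i by simp
      then show ?thesis using a by (simp add: nth_append insert_commute)
    qed
  qed simp
  then show ?case by simp
qed

lemma graph_edge: "graph V E \<Longrightarrow> {x, y} \<in> E \<Longrightarrow> x \<in> V \<and> y \<in> V \<and> x \<noteq> y"
  unfolding graph_def by (metis doubleton_eq_iff)

lemma walk_map:
  assumes "walk VF EF' xs" "f ` VF \<subseteq> V" "\<And>x y. {x,y} \<in> EF' \<Longrightarrow> {f x, f y} \<in> E"
  shows "walk V E (map f xs)"
  using assms unfolding walk_def by (auto simp: image_subset_iff)

definition short_cond :: "'b set \<Rightarrow> 'b set set \<Rightarrow> nat \<Rightarrow> bool" where
  "short_cond VF EF L \<longleftrightarrow> (\<forall>e\<in>EF. \<exists>a b xs. e = {a, b} \<and> walk VF (EF - {e}) xs \<and> hd xs = a \<and> last xs = b \<and> length xs \<le> L + 1)"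

lemma sat_short:
  assumes F: "graph VF EF" and sc: "short_cond VF EF L" and sat: "saturated V E VF EF"
    and uv: "u \<in> V" "v \<in> V" "u \<noteq> v" "{u, v} \<notin> E"
  shows "\<exists>xs. walk V E xs \<and> {hd xs, last xs} = {u, v} \<and> length xs \<le> L + 1"
proof -
  have "contains_copy V (insert {u, v} E) VF EF" using sat uv unfolding saturated_def by blast
  then obtain f where f: "inj_on f VF" "f ` VF \<subseteq> V" "\<And>x y. {x,y} \<in> EF \<Longrightarrow> {f x, f y} \<in> insert {u,v} E"
    unfolding contains_copy_def by blast
  have "\<exists>x y. {x,y} \<in> EF \<and> {f x, f y} = {u, v}"
  proof (rule ccontr)
    assume nex: "\<not> (\<exists>x y. {x,y} \<in> EF \<and> {f x, f y} = {u, v})"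
    have "\<forall>x y. {x,y} \<in> EF \<longrightarrow> {f x, f y} \<in> E"
    proof (intro allI impI)
      fix x y assume xy: "{x,y} \<in> EF"
      then have "{f x, f y} \<in> insert {u,v} E" by (rule f(3))
      moreover have "{f x, f y} \<noteq> {u,v}"
      proof
        assume "{f x, f y} = {u,v}"
        then have "\<exists>x y. {x,y} \<in> EF \<and> {f x, f y} = {u, v}" using xy by (intro exI conjI)
        then show False using nex by (rule notE[rotated])
      qed
      ultimately show "{f x, f y} \<in> E" by simp
    qed
    then have "contains_copy V E VF EF" using f(1,2) unfolding contains_copy_def by blast
    moreover have "\<not> contains_copy V E VF EF" using sat unfolding saturated_def by simp
    ultimately show False by simp
  qed
  then obtain x y where xy: "{x,y} \<in> EF" "{f x, f y} = {u, v}" by blast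
  have "\<exists>a b xs. {x,y} = {a, b} \<and> walk VF (EF - {{x,y}}) xs \<and> hd xs = a \<and> last xs = b \<and> length xs \<le> L + 1"
    using sc xy(1) unfolding short_cond_def by (rule bspec)
  then obtain a b xs where w: "{x,y} = {a, b}" "walk VF (EF - {{x,y}}) xs" "hd xs = a" "last xs = b" "length xs \<le> L + 1"
    by (elim exE conjE)
  have "walk V E (map f xs)"
  proof (rule walk_map[OF w(2) f(2)])
    fix p q assume pq: "{p, q} \<in> EF - {{x, y}}"
    have "{f p, f q} \<noteq> {u, v}"
    proof
      assume h: "{f p, f q} = {u, v}"
      have "f ` {p,q} = {f p, f q}" by simp
      also have "\<dots> = {u,v}" by (rule h)
      also have "\<dots> = {f x, f y}" using xy(2) by (rule sym)
      also have "\<dots> = f ` {x,y}" by simp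
      finally have "f ` {p, q} = f ` {x, y}" .
      moreover have "p \<in> VF \<and> q \<in> VF" using graph_edge[OF F, of p q] pq by blast
      moreover have "x \<in> VF \<and> y \<in> VF" using graph_edge[OF F, of x y] xy(1) by blast
      ultimately have i: "f ` {p, q} = f ` {x, y}" "{p,q} \<subseteq> VF" "{x,y} \<subseteq> VF" by simp_all
      have "{p,q} = {x,y}" by (rule iffD1[OF inj_on_image_eq_iff[OF f(1) i(2) i(3)] i(1)])
      then show False using pq by simp
    qed
    moreover have "{f p, f q} \<in> insert {u,v} E" using pq by (intro f(3)) simp
    ultimately show "{f p, f q} \<in> E" by simp
  qed
  moreover have "xs \<noteq> []" using w(2) by (simp add: walk_def)
  moreover have "{f a, f b} = {u, v}"
  proof -
    have "{f a, f b} = f ` {a,b}" by simp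
    also have "\<dots> = f ` {x,y}" using w(1) by simp
    also have "\<dots> = {u,v}" using xy(2) by simp
    finally show ?thesis .
  qed
  ultimately show ?thesis using w by (intro exI[of _ "map f xs"]) (simp add: hd_map last_map)
qed

lemma graph_edgeE: assumes "graph V E" "e \<in> E" shows "\<exists>u v. e = {u,v} \<and> u \<noteq> v \<and> u \<in> V \<and> v \<in> V"
proof -
  have "\<forall>e\<in>E. \<exists>u v. e = {u,v} \<and> u \<noteq> v \<and> u \<in> V \<and> v \<in> V" using assms(1) by (simp add: graph_def)
  then show ?thesis using assms(2) by (rule bspec)
qed

lemma pairs_sub: "{p. {a,b} = {fst p, snd p}} \<subseteq> {(a,b),(b,a)}"
proof
  fix p assume "p \<in> {p. {a,b} = {fst p, snd p}}"
  then have "{a,b} = {fst p, snd p}" by simp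
  then have "(a = fst p \<and> b = snd p) \<or> (a = snd p \<and> b = fst p)" by (simp add: doubleton_eq_iff)
  then show "p \<in> {(a,b),(b,a)}" by (cases p) auto
qed

lemma pairs_card: "card {p. {a,b} = {fst p, snd p}} \<le> 2 \<and> finite {p. {a,b} = {fst p, snd p}}"
proof
  have f: "finite {(a,b),(b,a)}" by simp
  have "card {p. {a,b} = {fst p, snd p}} \<le> card {(a,b),(b,a)}" by (rule card_mono[OF f pairs_sub])
  also have "card {(a,b),(b,a)} \<le> 2" by (cases "a = b") simp_all
  finally show "card {p. {a,b} = {fst p, snd p}} \<le> 2" .
  show "finite {p. {a,b} = {fst p, snd p}}" by (rule finite_subset[OF pairs_sub f])
qed

lemma handshake:
  assumes G: "graph V E"
  shows "(\<Sum>v\<in>V. degree V E v) \<le> 2 * card E"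
proof -
  have fV: "finite V" using G by (simp add: graph_def)
  have fE: "finite E"
  proof (rule finite_subset[of E "Pow V"])
    show "E \<subseteq> Pow V"
    proof
      fix e assume "e \<in> E"
      then have "\<exists>u v. e = {u,v} \<and> u \<noteq> v \<and> u \<in> V \<and> v \<in> V" by (rule graph_edgeE[OF G])
      then obtain u v where "e = {u,v} \<and> u \<noteq> v \<and> u \<in> V \<and> v \<in> V" by (elim exE)
      then show "e \<in> Pow V" by auto
    qed
  qed (use fV in simp)
  have pe: "card {p. e = {fst p, snd p}} \<le> 2 \<and> finite {p. e = {fst p, snd p}}" if eE: "e \<in> E" for e
  proof -
    have "\<exists>u v. e = {u,v} \<and> u \<noteq> v \<and> u \<in> V \<and> v \<in> V" by (rule graph_edgeE[OF G eE])
    then obtain a b where ab: "e = {a,b}" by blast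
    show ?thesis unfolding ab using pairs_card[of a b] by (rule conjE) (rule conjI)
  qed
  have "(\<Sum>v\<in>V. degree V E v) = card (SIGMA v:V. {u \<in> V. {u, v} \<in> E})"
    unfolding degree_def using fV by (simp add: card_SigmaI)
  also have "\<dots> \<le> card (\<Union>e\<in>E. {p. e = {fst p, snd p}})"
  proof (rule card_mono)
    show "finite (\<Union>e\<in>E. {p. e = {fst p, snd p}})"
      using pe fE by (intro finite_UN_I) simp_all
    show "(SIGMA v:V. {u \<in> V. {u, v} \<in> E}) \<subseteq> (\<Union>e\<in>E. {p. e = {fst p, snd p}})"
    proof
      fix p assume p: "p \<in> (SIGMA v:V. {u \<in> V. {u, v} \<in> E})"
      obtain v u where vu: "p = (v,u)" by (cases p)
      then have "{u,v} \<in> E" using p by simp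
      moreover have "{u,v} = {fst p, snd p}" using vu by (simp add: insert_commute)
      ultimately show "p \<in> (\<Union>e\<in>E. {p. e = {fst p, snd p}})" by (intro UN_I[of "{u,v}"]) simp_all
    qed
  qed
  also have "\<dots> \<le> (\<Sum>e\<in>E. card {p. e = {fst p, snd p}})" by (rule card_UN_le[OF fE])
  also have "\<dots> \<le> (\<Sum>e\<in>E. 2)" using pe by (intro sum_mono) simp
  finally show ?thesis by simp
qed

fun ball :: "nat set \<Rightarrow> nat set set \<Rightarrow> nat \<Rightarrow> nat \<Rightarrow> nat set" where
  "ball V E x 0 = {x}"
| "ball V E x (Suc j) = ball V E x j \<union> (\<Union>y\<in>ball V E x j. {w \<in> V. {w, y} \<in> E})"

lemma ball_mono: "j \<le> k \<Longrightarrow> ball V E x j \<subseteq> ball V E x k"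
  by (rule lift_Suc_mono_le[of "ball V E x"]) auto

lemma ball_card:
  assumes fV: "finite V" and deg: "\<forall>v\<in>V. degree V E v = d" and x: "x \<in> V"
  shows "ball V E x j \<subseteq> V \<and> card (ball V E x j) \<le> (d+1)^j"
proof (induction j)
  case 0 then show ?case using x by simp
next
  case (Suc j)
  let ?B = "ball V E x j"
  have fB: "finite ?B" using Suc fV finite_subset by blast
  have "card (ball V E x (Suc j)) \<le> card ?B + card (\<Union>y\<in>?B. {w \<in> V. {w, y} \<in> E})"
    by (simp add: card_Un_le)
  also have "card (\<Union>y\<in>?B. {w \<in> V. {w, y} \<in> E}) \<le> (\<Sum>y\<in>?B. card {w \<in> V. {w, y} \<in> E})"
    by (rule card_UN_le[OF fB])
  also have "\<dots> = (\<Sum>y\<in>?B. d)"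
    using Suc deg by (intro sum.cong) (auto simp: degree_def)
  also have "\<dots> = card ?B * d" by simp
  finally have "card (ball V E x (Suc j)) \<le> card ?B * (d+1)" by simp
  also have "\<dots> \<le> (d+1)^j * (d+1)" using Suc by (intro mult_right_mono) simp_all
  finally show ?case using Suc by (auto simp: mult.commute)
qed

lemma walk_in_ball:
  assumes w: "walk V E xs" and h: "hd xs = x"
  shows "last xs \<in> ball V E x (length xs - 1)"
proof -
  have ne: "xs \<noteq> []" using w by (simp add: walk_def)
  have "\<forall>i. i < length xs \<longrightarrow> xs ! i \<in> ball V E x i"
  proof (intro allI)
    fix i show "i < length xs \<longrightarrow> xs ! i \<in> ball V E x i"
    proof (induction i)
      case 0 then show ?case using h ne by (simp add: hd_conv_nth)
    next
      case (Suc i)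
      show ?case
      proof
        assume i: "Suc i < length xs"
        then have e: "{xs ! i, xs ! (i+1)} \<in> E" using w unfolding walk_def by simp
        have "xs ! Suc i \<in> V" using w i unfolding walk_def by (meson nth_mem subsetD)
        then show "xs ! Suc i \<in> ball V E x (Suc i)" using Suc i e by (auto simp: insert_commute)
      qed
    qed
  qed
  then show ?thesis using ne by (simp add: last_conv_nth)
qed

lemma moore:
  assumes G: "graph {0..<n} E" and deg: "\<forall>v\<in>{0..<n}. degree {0..<n} E v = d" and n: "n \<ge> 1"
    and conn: "\<And>u v. u < n \<Longrightarrow> v < n \<Longrightarrow> u \<noteq> v \<Longrightarrow> \<exists>xs. walk {0..<n} E xs \<and> {hd xs, last xs} = {u, v} \<and> length xs \<le> L + 1"
  shows "n \<le> (d+1)^L"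
proof -
  let ?V = "{0..<n}"
  have x: "0 \<in> ?V" using n by simp
  have "?V \<subseteq> ball ?V E 0 L"
  proof
    fix w assume w: "w \<in> ?V"
    show "w \<in> ball ?V E 0 L"
    proof (cases "w = 0")
      case True then show ?thesis using ball_mono[of 0 L] by auto
    next
      case False
      then obtain xs where xs: "walk ?V E xs" "{hd xs, last xs} = {0, w}" "length xs \<le> L + 1"
        using conn[of 0 w] w n by auto
      have "\<exists>ys. walk ?V E ys \<and> hd ys = 0 \<and> last ys = w \<and> length ys \<le> L + 1"
      proof (cases "hd xs = 0")
        case True then show ?thesis using xs False by (intro exI[of _ xs]) (auto simp: doubleton_eq_iff)
      next
        case F2: False
        then have "hd xs = w" "last xs = 0" using xs(2) by (auto simp: doubleton_eq_iff)
        moreover have "xs \<noteq> []" using xs(1) by (simp add: walk_def)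
        ultimately show ?thesis using xs walk_rev by (intro exI[of _ "rev xs"]) (auto simp: hd_rev last_rev)
      qed
      then obtain ys where ys: "walk ?V E ys" "hd ys = 0" "last ys = w" "length ys \<le> L + 1" by blast
      then have "w \<in> ball ?V E 0 (length ys - 1)" using walk_in_ball by metis
      moreover have "length ys - 1 \<le> L" using ys(4) by simp
      ultimately show ?thesis using ball_mono[of "length ys - 1" L] by blast
    qed
  qed
  moreover have "ball ?V E 0 L \<subseteq> ?V \<and> card (ball ?V E 0 L) \<le> (d+1)^L"
    using ball_card[OF _ deg x] by simp
  ultimately have "card ?V \<le> (d+1)^L"
    by (metis subset_antisym)
  then show ?thesis by simp
qed

lemma rsat_lower:
  assumes F: "graph VF EF" and sc: "short_cond VF EF L" and L: "L \<ge> 1"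
    and En: "E \<in> rsat_graphs n VF EF" and n: "n \<ge> 1"
  shows "\<exists>d. n \<le> (d+1)^L \<and> n*d \<le> 2*card E"
proof -
  have G: "graph {0..<n} E" "regular {0..<n} E" "saturated {0..<n} E VF EF"
    using En by (simp_all add: rsat_graphs_def)
  obtain d where deg: "\<forall>v\<in>{0..<n}. degree {0..<n} E v = d" using G(2) unfolding regular_def by blast
  have "n \<le> (d+1)^L"
  proof (rule moore[OF G(1) deg n])
    fix u v assume uv: "u < n" "v < n" "u \<noteq> v"
    show "\<exists>xs. walk {0..<n} E xs \<and> {hd xs, last xs} = {u,v} \<and> length xs \<le> L+1"
    proof (cases "{u,v} \<in> E")
      case True
      have "walk {0..<n} E [u,v]" using True uv by (simp add: walk_Cons2 walk_single)
      then show ?thesis using L by (intro exI[of _ "[u,v]"]) simp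
    next
      case False
      show ?thesis by (rule sat_short[OF F sc G(3)]) (use uv False in simp_all)
    qed
  qed
  moreover have "n*d \<le> 2*card E"
  proof -
    have "(\<Sum>v\<in>{0..<n}. degree {0..<n} E v) = (\<Sum>v\<in>{0..<n}. d)" using deg by (intro sum.cong) simp_all
    then show ?thesis using handshake[OF G(1)] by (simp add: mult.commute)
  qed
  ultimately show ?thesis by blast
qed

lemma rsat_attained:
  assumes "rsat_defined n VF EF"
  shows "\<exists>E\<in>rsat_graphs n VF EF. rsat n VF EF = card E"
proof -
  have "card ` rsat_graphs n VF EF \<noteq> {}" using assms by (simp add: rsat_defined_def)
  then have "rsat n VF EF \<in> card ` rsat_graphs n VF EF" unfolding rsat_def by (rule Inf_nat_def1)
  then show ?thesis by auto
qed

lemma powr_root_pow: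
  fixes y :: real assumes "y > 0" "L \<ge> (1::nat)"
  shows "(y ^ L) powr (1 / real L) = y"
proof -
  have "(y ^ L) powr (1 / real L) = (y powr real L) powr (1 / real L)" using assms by (simp add: powr_realpow)
  also have "\<dots> = y powr (real L * (1 / real L))" by (simp add: powr_powr)
  also have "\<dots> = y" using assms by simp
  finally show ?thesis .
qed

lemma rsat_defined_lower:
  assumes F: "graph VF EF" and sc: "short_cond VF EF L" and L: "L \<ge> 1"
    and def: "rsat_defined n VF EF" and n: "n \<ge> 2^L"
  shows "real n powr (1 + 1 / real L) / 4 \<le> real (rsat n VF EF)"
proof -
  obtain E where En: "E \<in> rsat_graphs n VF EF" and r: "rsat n VF EF = card E"
    using rsat_attained[OF def] by blast
  have "1 \<le> (2::nat)^L" by simp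
  then have n1: "n \<ge> 1" using n by linarith
  obtain d where d: "n \<le> (d+1)^L" "n*d \<le> 2*card E" using rsat_lower[OF F sc L En n1] by blast
  define x where "x = real n powr (1 / real L)"
  have np: "real n > 0" using n1 by simp
  have "real n \<le> real ((d+1)^L)" using d(1) by (simp only: of_nat_le_iff)
  then have nle: "real n \<le> real (d+1) ^ L" by (simp only: of_nat_power)
  have "x \<le> (real (d+1) ^ L) powr (1 / real L)"
    unfolding x_def by (rule powr_mono2[OF _ _ nle]) simp_all
  also have "\<dots> = real (d+1)" using L by (intro powr_root_pow) simp_all
  finally have xd: "x \<le> real d + 1" by simp
  have "(2::real) = (2 ^ L) powr (1 / real L)" using L by (intro powr_root_pow[symmetric]) simp_all
  also have "\<dots> \<le> x"
  proof -
    have "real (2^L) \<le> real n" using n by (simp only: of_nat_le_iff)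
    then have n2: "(2::real) ^ L \<le> real n" by simp
    show ?thesis unfolding x_def by (rule powr_mono2[OF _ _ n2]) simp_all
  qed
  finally have x2: "2 \<le> x" .
  have eq: "real n powr (1 + 1 / real L) = real n * x" unfolding x_def using np by (simp add: powr_add)
  have "real n * x / 4 \<le> real n * real d / 2"
  proof -
    have "x / 2 \<le> real d" using xd x2 by simp
    then have "real n * (x/2) \<le> real n * real d" using np by (intro mult_left_mono) simp_all
    then show ?thesis by linarith
  qed
  also have "\<dots> \<le> real (card E)" using d(2) by (simp add: of_nat_mult[symmetric] del: of_nat_mult)
  finally show ?thesis using r eq by simp
qed

lemma omega_bound:
  assumes F: "graph VF EF" and sc: "short_cond VF EF L" and L: "L \<ge> 1"
  shows "(\<lambda>n. real (rsat n VF EF)) \<in> \<Omega>[rsat_filter VF EF](\<lambda>n. real n powr (1 + 1 / real L))"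
proof (rule landau_omega.bigI[of "1/4"])
  show "eventually (\<lambda>n. 1/4 * norm (real n powr (1 + 1 / real L)) \<le> norm (real (rsat n VF EF))) (rsat_filter VF EF)"
    unfolding rsat_filter_def eventually_inf_principal eventually_sequentially
  proof (intro exI[of _ "2^L"] allI impI)
    fix n assume n: "2^L \<le> n" and def: "n \<in> {n. rsat_defined n VF EF}"
    have "real n powr (1 + 1 / real L) / 4 \<le> real (rsat n VF EF)"
      using rsat_defined_lower[OF F sc L _ n] def by simp
    then show "1/4 * norm (real n powr (1 + 1 / real L)) \<le> norm (real (rsat n VF EF))" by simp
  qed
qed simp

lemma mod_shift_ne:
  fixes i s k :: nat assumes "i < k" "0 < s" "s < k"
  shows "(i + s) mod k \<noteq> i"
proof (cases "i + s < k")
  case True then show ?thesis using assms by simp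
next
  case False
  then have "(i + s) mod k = (i + s - k) mod k" by (simp add: le_mod_geq)
  also have "\<dots> = i + s - k" using assms by simp
  finally show ?thesis using assms False by simp
qed

lemma cycle_short:
  assumes F: "graph VF EF" and cyc: "\<forall>e\<in>EF. \<exists>k\<le>m + 1. in_cycle_of_length EF e k"
  shows "short_cond VF EF m"
  unfolding short_cond_def
proof
  fix e assume eE: "e \<in> EF"
  obtain k where k: "k \<le> m + 1" "in_cycle_of_length EF e k" using cyc eE by blast
  obtain xs where xs: "length xs = k" "k \<ge> 3" "distinct xs"
     "\<forall>i<k. {xs ! i, xs ! ((i + 1) mod k)} \<in> EF"
     "\<exists>i<k. e = {xs ! i, xs ! ((i + 1) mod k)}"
    using k(2) unfolding in_cycle_of_length_def by blast
  obtain i where i: "i < k" "e = {xs ! i, xs ! ((i + 1) mod k)}" using xs(5) by blast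
  define ys where "ys = rotate (Suc i) xs"
  have ly: "length ys = k" using xs(1) by (simp add: ys_def)
  have ysn: "ys ! j = xs ! ((Suc i + j) mod k)" if "j < k" for j
    unfolding ys_def by (subst nth_rotate) (use that xs(1) in simp_all)
  have ne: "ys \<noteq> []" using ly xs(2) by auto
  have hd: "hd ys = xs ! ((i + 1) mod k)" using ne ysn[of 0] xs(2) by (simp add: hd_conv_nth)
  have "last ys = ys ! (k - 1)" using ne ly by (simp add: last_conv_nth)
  also have "\<dots> = xs ! ((Suc i + (k - 1)) mod k)" using xs(2) by (intro ysn) simp
  also have "(Suc i + (k - 1)) mod k = i" using xs(2) i(1) by simp
  finally have lst: "last ys = xs ! i" .
  have inV: "x \<in> VF" if "x \<in> set xs" for x
  proof -
    have "\<exists>j<length xs. xs ! j = x" using that by (simp only: in_set_conv_nth)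
    then obtain j where j0: "j < length xs" "xs ! j = x" by (elim exE conjE)
    then have j: "j < k" "x = xs ! j" using xs(1) by simp_all
    have "{xs ! j, xs ! ((j + 1) mod k)} \<in> EF" using j(1) by (rule xs(4)[rule_format])
    then show ?thesis using graph_edge[OF F, of "xs ! j" "xs ! ((j + 1) mod k)"] j(2) by simp
  qed
  have wk: "walk VF (EF - {e}) ys"
    unfolding walk_def
  proof (intro conjI allI impI)
    show "ys \<noteq> []" by (rule ne)
    show "set ys \<subseteq> VF" using inV by (auto simp: ys_def)
    fix j assume j: "j + 1 < length ys"
    define p where "p = (Suc i + j) mod k"
    have pk: "p < k" using xs(2) by (simp add: p_def)
    have y1: "ys ! j = xs ! p" using j ly ysn p_def by simp
    have "ys ! (j+1) = xs ! ((Suc i + (j+1)) mod k)" using j ly ysn by simp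
    also have "(Suc i + (j+1)) mod k = (p + 1) mod k" unfolding p_def by (simp add: mod_Suc_eq)
    finally have y2: "ys ! (j+1) = xs ! ((p + 1) mod k)" .
    have inE: "{xs ! p, xs ! ((p + 1) mod k)} \<in> EF" using pk by (rule xs(4)[rule_format])
    have ne1: "{xs ! p, xs ! ((p + 1) mod k)} \<noteq> e"
    proof
      assume eq: "{xs ! p, xs ! ((p + 1) mod k)} = e"
      have p1: "(p + 1) mod k < k" "(i+1) mod k < k" using xs(2) by simp_all
      have "(xs ! p = xs ! i \<and> xs ! ((p + 1) mod k) = xs ! ((i + 1) mod k)) \<or>
            (xs ! p = xs ! ((i + 1) mod k) \<and> xs ! ((p + 1) mod k) = xs ! i)"
        using eq i(2) by (simp add: doubleton_eq_iff)
      then show False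
      proof
        assume h: "xs ! p = xs ! i \<and> xs ! ((p + 1) mod k) = xs ! ((i + 1) mod k)"
        have "p = i" using nth_eq_iff_index_eq[of xs p i] h xs(1,3) pk i(1) by simp
        moreover have "(i + (j+1)) mod k \<noteq> i" using i(1) j ly by (intro mod_shift_ne) simp_all
        ultimately show False unfolding p_def by simp
      next
        assume h: "xs ! p = xs ! ((i + 1) mod k) \<and> xs ! ((p + 1) mod k) = xs ! i"
        have "p = (i + 1) mod k" using nth_eq_iff_index_eq[of xs p "(i + 1) mod k"] h xs(1,3) pk p1 by simp
        moreover have "(p + 1) mod k = i" using nth_eq_iff_index_eq[of xs "(p + 1) mod k" i] h xs(1,3) i(1) p1 by simp
        ultimately have "((i + 1) mod k + 1) mod k = i" by simp
        then have "(i + 2) mod k = i" by (simp add: mod_Suc_eq)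
        moreover have "(i + 2) mod k \<noteq> i" using i(1) xs(2) by (intro mod_shift_ne) simp_all
        ultimately show False by simp
      qed
    qed
    show "{ys ! j, ys ! (j + 1)} \<in> EF - {e}" using inE ne1 y1 y2 by simp
  qed
  have eqe: "e = {xs ! ((i + 1) mod k), xs ! i}" using i(2) by (simp add: insert_commute)
  show "\<exists>a b ys. e = {a, b} \<and> walk VF (EF - {e}) ys \<and> hd ys = a \<and> last ys = b \<and> length ys \<le> m + 1"
  proof (intro exI conjI)
    show "e = {xs ! ((i + 1) mod k), xs ! i}" by (rule eqe)
    show "walk VF (EF - {e}) ys" by (rule wk)
    show "hd ys = xs ! ((i + 1) mod k)" by (rule hd)
    show "last ys = xs ! i" by (rule lst)
    show "length ys \<le> m + 1" using ly k(1) by simp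
  qed
qed

lemma diam_short:
  assumes F: "graph VF EF" and dm: "\<forall>e\<in>EF. diameter VF (EF - {e}) \<le> enat r"
  shows "short_cond VF EF r"
  unfolding short_cond_def
proof
  fix e assume eE: "e \<in> EF"
  have "\<exists>u v. e = {u,v} \<and> u \<noteq> v \<and> u \<in> VF \<and> v \<in> VF" by (rule graph_edgeE[OF F eE])
  then obtain a b where ab: "e = {a,b}" by blast
  have abV: "a \<in> VF" "b \<in> VF" using graph_edge[OF F, of a b] eE ab by simp_all
  have "dist VF (EF - {e}) a b \<le> (SUP v\<in>VF. dist VF (EF - {e}) a v)" using abV by (intro SUP_upper)
  also have "\<dots> \<le> diameter VF (EF - {e})" unfolding diameter_def using abV
    by (intro SUP_upper[where f = "\<lambda>u. SUP v\<in>VF. dist VF (EF - {e}) u v"])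
  also have "\<dots> \<le> enat r" using dm eE by blast
  also have "\<dots> < enat (Suc r)" by simp
  finally have "(INF xs \<in> {xs. walk VF (EF - {e}) xs \<and> hd xs = a \<and> last xs = b}. enat (length xs - 1)) < enat (Suc r)"
    unfolding dist_def .
  then obtain xs where xs: "walk VF (EF - {e}) xs" "hd xs = a" "last xs = b" "enat (length xs - 1) < enat (Suc r)"
    unfolding INF_less_iff by blast
  then have "length xs \<le> r + 1" by simp
  then show "\<exists>a b xs. e = {a, b} \<and> walk VF (EF - {e}) xs \<and> hd xs = a \<and> last xs = b \<and> length xs \<le> r + 1"
  proof (intro exI conjI)
    show "e = {a, b}" by (rule ab)
  qed (use xs in simp_all)
qed

lemma reachable_refl: "x \<in> V \<Longrightarrow> reachable V E x x"
  by (simp add: reachable_iff)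

lemma adj_sym: "adj V E x y = adj V E y x"
  by (auto simp: adj_def insert_commute)

lemma adj_conv: "(adj V E)\<inverse>\<inverse> = adj V E"
  using adj_sym by (intro ext) (simp add: conversep_iff)

lemma rtranclp_adj_sym: "(adj V E)\<^sup>*\<^sup>* x y \<Longrightarrow> (adj V E)\<^sup>*\<^sup>* y x"
proof -
  assume "(adj V E)\<^sup>*\<^sup>* x y"
  then have "((adj V E)\<inverse>\<inverse>)\<^sup>*\<^sup>* y x" by (rule rtranclp_converseI)
  then show ?thesis by (simp only: adj_conv)
qed

definition rrel :: "'a set \<Rightarrow> 'a set set \<Rightarrow> ('a \<times> 'a) set" where
  "rrel V E = {(u, v). u \<in> V \<and> v \<in> V \<and> reachable V E u v}"

lemma components_rrel: "components V E = V // rrel V E"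
  by (simp add: components_def rrel_def)

lemma comp_connected:
  assumes c: "connected_graph V E" and ne: "V \<noteq> {}"
  shows "components V E = {V}"
proof -
  have r: "rrel V E = V \<times> V" using c unfolding rrel_def connected_graph_def by auto
  have "V // (V \<times> V) = {V}" using ne unfolding quotient_def by auto
  then show ?thesis using r components_rrel by metis
qed

lemma finite_components:
  assumes "finite V" shows "finite (components V E)"
proof -
  have "components V E \<subseteq> Pow V" unfolding components_rrel quotient_def rrel_def by auto
  then show ?thesis by (rule finite_subset) (simp add: assms)
qed

lemma two_comps:
  assumes fV: "finite V" and ab: "a \<in> V" "b \<in> V" and nr: "\<not> reachable V E a b"
  shows "card (components V E) \<ge> 2"
proof -
  let ?R = "rrel V E"
  have A: "?R `` {a} \<in> components V E" unfolding components_rrel using ab(1) by (rule quotientI)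
  have B: "?R `` {b} \<in> components V E" unfolding components_rrel using ab(2) by (rule quotientI)
  have "b \<in> ?R `` {b}" using ab reachable_refl[of b V E] by (simp add: rrel_def)
  moreover have "b \<notin> ?R `` {a}" using nr by (simp add: rrel_def)
  ultimately have "?R `` {a} \<noteq> ?R `` {b}" by metis
  then have "card {?R `` {a}, ?R `` {b}} = 2" by simp
  moreover have "card {?R `` {a}, ?R `` {b}} \<le> card (components V E)"
    using A B finite_components[OF fV] by (intro card_mono) simp_all
  ultimately show ?thesis by simp
qed

lemma cut_if_unreach:
  assumes F: "graph VF EF" and c: "connected_graph VF EF" and eE: "{a,b} \<in> EF"
    and nr: "\<not> reachable VF (EF - {{a,b}}) a b"
  shows "cut_edge VF EF {a,b}"
proof -
  have ab: "a \<in> VF" "b \<in> VF" using graph_edge[OF F eE] by simp_all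
  have fV: "finite VF" using F by (simp add: graph_def)
  have "components VF EF = {VF}" using comp_connected[OF c] ab by blast
  then have "card (components VF EF) = 1" by simp
  moreover have "card (components VF (EF - {{a,b}})) \<ge> 2" by (rule two_comps[OF fV ab nr])
  ultimately show ?thesis unfolding cut_edge_def using eE by simp
qed

lemma unreach_if_cut:
  assumes F: "graph VF EF" and c: "connected_graph VF EF" and cut: "cut_edge VF EF {a,b}"
  shows "\<not> reachable VF (EF - {{a,b}}) a b"
proof
  assume r: "reachable VF (EF - {{a,b}}) a b"
  let ?E' = "EF - {{a,b}}"
  have eE: "{a,b} \<in> EF" using cut by (simp add: cut_edge_def)
  have ab: "a \<in> VF" "b \<in> VF" using graph_edge[OF F eE] by simp_all
  have rab: "(adj VF ?E')\<^sup>*\<^sup>* a b" using r by (simp add: reachable_iff)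
  have rba: "(adj VF ?E')\<^sup>*\<^sup>* b a" using rtranclp_adj_sym[OF rab] .
  have step: "(adj VF ?E')\<^sup>*\<^sup>* x y" if "adj VF EF x y" for x y
  proof (cases "{x,y} = {a,b}")
    case True
    then have "(x = a \<and> y = b) \<or> (x = b \<and> y = a)" by (simp add: doubleton_eq_iff)
    then show ?thesis using rab rba by (elim disjE conjE) simp_all
  next
    case False
    then have "adj VF ?E' x y" using that by (simp add: adj_def)
    then show ?thesis by simp
  qed
  have c': "connected_graph VF ?E'"
    unfolding connected_graph_def
  proof (intro ballI)
    fix u v assume uv: "u \<in> VF" "v \<in> VF"
    then have "(adj VF EF)\<^sup>*\<^sup>* u v" using c by (simp add: connected_graph_def reachable_iff)
    then have "(adj VF ?E')\<^sup>*\<^sup>* u v"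
    proof (induction rule: rtranclp_induct)
      case base then show ?case by simp
    next
      case (step y z)
      then show ?case using step(3) step.hyps(2) by (meson rtranclp_trans \<open>\<And>x y. adj VF EF x y \<Longrightarrow> (adj VF ?E')\<^sup>*\<^sup>* x y\<close>)
    qed
    then show "reachable VF ?E' u v" using uv by (simp add: reachable_iff)
  qed
  have "components VF ?E' = {VF}" using comp_connected[OF c'] ab by blast
  moreover have "components VF EF = {VF}" using comp_connected[OF c] ab by blast
  ultimately show False using cut by (simp add: cut_edge_def)
qed

lemma finite_bound:
  assumes "finite A" "\<forall>x\<in>A. \<exists>n::nat. \<forall>m\<ge>n. Q x m"
  shows "\<exists>N. \<forall>x\<in>A. \<forall>m\<ge>N. Q x m"
  using assms
proof (induction A rule: finite_induct)
  case empty then show ?case by simp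
next
  case (insert y A)
  obtain N where N: "\<forall>x\<in>A. \<forall>m\<ge>N. Q x m" using insert by blast
  obtain n where n: "\<forall>m\<ge>n. Q y m" using insert.prems by blast
  show ?case
  proof (intro exI[of _ "max N n"] ballI allI impI)
    fix x m assume "x \<in> insert y A" "max N n \<le> m"
    then show "Q x m" using N n by auto
  qed
qed

lemma bridgeless_short:
  assumes F: "graph VF EF" and c: "connected_graph VF EF" and nc: "\<not> (\<exists>e\<in>EF. cut_edge VF EF e)"
  shows "\<exists>L\<ge>1. short_cond VF EF L"
proof -
  have fV: "finite VF" using F by (simp add: graph_def)
  have fE: "finite EF"
  proof (rule finite_subset[of EF "Pow VF"])
    show "EF \<subseteq> Pow VF"
    proof
      fix e assume "e \<in> EF"
      then have "\<exists>u v. e = {u,v} \<and> u \<noteq> v \<and> u \<in> VF \<and> v \<in> VF" by (rule graph_edgeE[OF F])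
      then obtain u v where "e = {u,v} \<and> u \<noteq> v \<and> u \<in> VF \<and> v \<in> VF" by (elim exE)
      then show "e \<in> Pow VF" by auto
    qed
  qed (use fV in simp)
  let ?Q = "\<lambda>e m. \<exists>a b xs. e = {a, b} \<and> walk VF (EF - {e}) xs \<and> hd xs = a \<and> last xs = b \<and> length xs \<le> m + 1"
  have "\<forall>e\<in>EF. \<exists>n. \<forall>m\<ge>n. ?Q e m"
  proof
    fix e assume eE: "e \<in> EF"
    have "\<exists>u v. e = {u,v} \<and> u \<noteq> v \<and> u \<in> VF \<and> v \<in> VF" by (rule graph_edgeE[OF F eE])
    then obtain a b where ab: "e = {a,b}" by blast
    have "\<not> cut_edge VF EF {a,b}" using nc eE ab by blast
    then have "reachable VF (EF - {{a,b}}) a b" using cut_if_unreach[OF F c] eE ab by blast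
    then obtain xs where xs: "walk VF (EF - {e}) xs" "hd xs = a" "last xs = b"
      unfolding reachable_def ab by blast
    show "\<exists>n. \<forall>m\<ge>n. ?Q e m"
    proof (intro exI[of _ "length xs"] allI impI)
      fix m assume lm: "length xs \<le> m"
      show "?Q e m"
      proof (intro exI conjI)
        show "e = {a,b}" by (rule ab)
        show "walk VF (EF - {e}) xs" by (rule xs(1))
        show "hd xs = a" by (rule xs(2))
        show "last xs = b" by (rule xs(3))
        show "length xs \<le> m + 1" using lm by simp
      qed
    qed
  qed
  then have "\<exists>N. \<forall>e\<in>EF. \<forall>m\<ge>N. ?Q e m" by (rule finite_bound[OF fE])
  then obtain N where N: "\<forall>e\<in>EF. \<forall>m\<ge>N. ?Q e m" by (elim exE)
  show ?thesis
  proof (intro exI conjI)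
    show "(1::nat) \<le> max N 1" by simp
    show "short_cond VF EF (max N 1)" unfolding short_cond_def
    proof
      fix e assume eE: "e \<in> EF"
      show "?Q e (max N 1)" by (rule N[rule_format, OF eE]) simp
    qed
  qed
qed

lemma div_block: "(0::nat) < t \<Longrightarrow> (x div t = b) \<longleftrightarrow> (b*t \<le> x \<and> x < b*t + t)"
  by (smt (verit, ccfv_SIG) Euclidean_Rings.div_eq_0_iff
    add_cancel_left_right div_mult_self4 less_eq_div_iff_mult_less_eq
    mult.commute nat_add_left_cancel_less nat_le_iff_add neq0_conv)

lemma block_sub: "(b::nat) < q \<Longrightarrow> {b*t..<b*t+t} \<subseteq> {0..<q*t}"
proof -
  assume "b < q"
  then have "b*t + t \<le> q*t" by (metis Suc_leI add.commute mult_Suc mult_le_mono1)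
  then show ?thesis by auto
qed

definition blkE :: "nat \<Rightarrow> nat \<Rightarrow> nat set set" where
  "blkE t n = {{x,y} | x y. x < n \<and> y < n \<and> x \<noteq> y \<and> x div t = y div t}"

lemma blkE_elem: "e \<in> blkE t n \<Longrightarrow> \<exists>x y. e = {x,y} \<and> x < n \<and> y < n \<and> x \<noteq> y \<and> x div t = y div t"
  unfolding blkE_def by (simp only: mem_Collect_eq)

lemma blkE_mem: "{u,v} \<in> blkE t n \<longleftrightarrow> u < n \<and> v < n \<and> u \<noteq> v \<and> u div t = v div t"
proof
  assume "{u,v} \<in> blkE t n"
  then have "\<exists>x y. {u,v} = {x,y} \<and> x < n \<and> y < n \<and> x \<noteq> y \<and> x div t = y div t" by (rule blkE_elem)
  then obtain x y where xy: "{u,v} = {x,y}" "x < n" "y < n" "x \<noteq> y" "x div t = y div t" by (elim exE conjE)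
  from xy(1) have "(u = x \<and> v = y) \<or> (u = y \<and> v = x)" by (simp add: doubleton_eq_iff)
  then show "u < n \<and> v < n \<and> u \<noteq> v \<and> u div t = v div t"
  proof
    assume "u = x \<and> v = y" then show ?thesis using xy by simp
  next
    assume "u = y \<and> v = x" then show ?thesis using xy by simp
  qed
next
  assume h: "u < n \<and> v < n \<and> u \<noteq> v \<and> u div t = v div t"
  show "{u,v} \<in> blkE t n" unfolding blkE_def mem_Collect_eq
    by (rule exI[of _ u], rule exI[of _ v]) (simp add: h)
qed

lemma blk_graph: "graph {0..<n} (blkE t n)"
  unfolding graph_def
proof (intro conjI ballI)
  fix e assume "e \<in> blkE t n"
  then have "\<exists>x y. e = {x,y} \<and> x < n \<and> y < n \<and> x \<noteq> y \<and> x div t = y div t" by (rule blkE_elem)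
  then obtain x y where xy: "e = {x,y}" "x < n" "y < n" "x \<noteq> y" by (elim exE conjE)
  show "\<exists>u v. e = {u, v} \<and> u \<noteq> v \<and> u \<in> {0..<n} \<and> v \<in> {0..<n}"
    by (rule exI[of _ x], rule exI[of _ y]) (simp add: xy)
qed simp

lemma blk_degree:
  assumes t: "0 < t" and v: "v < q*t"
  shows "degree {0..<q*t} (blkE t (q*t)) v = t - 1"
proof -
  let ?b = "v div t"
  have bq: "?b < q" using v by (simp add: less_mult_imp_div_less)
  have vB: "v \<in> {?b*t..<?b*t+t}" using div_block[OF t, of v ?b] by simp
  have "{u \<in> {0..<q*t}. {u, v} \<in> blkE t (q*t)} = {?b*t..<?b*t+t} - {v}"
  proof (intro set_eqI iffI)
    fix u assume "u \<in> {u \<in> {0..<q*t}. {u, v} \<in> blkE t (q*t)}"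
    then have "u < q*t" "u \<noteq> v" "u div t = ?b" by (simp_all add: blkE_mem)
    then show "u \<in> {?b*t..<?b*t+t} - {v}" using div_block[OF t, of u ?b] by simp
  next
    fix u assume u: "u \<in> {?b*t..<?b*t+t} - {v}"
    then have "u div t = ?b" using div_block[OF t, of u ?b] by simp
    moreover have "u < q*t" using u block_sub[OF bq, of t] by auto
    ultimately show "u \<in> {u \<in> {0..<q*t}. {u, v} \<in> blkE t (q*t)}" using u v by (simp add: blkE_mem)
  qed
  then show ?thesis unfolding degree_def using vB by simp
qed

lemma blk_free:
  assumes t: "0 < t" and c: "connected_graph VF EF" and cV: "card VF = t + 1"
  shows "\<not> contains_copy {0..<n} (blkE t n) VF EF"
proof
  assume "contains_copy {0..<n} (blkE t n) VF EF"
  then obtain f where f: "inj_on f VF" "f ` VF \<subseteq> {0..<n}" "\<forall>u v. {u, v} \<in> EF \<longrightarrow> {f u, f v} \<in> blkE t n"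
    unfolding contains_copy_def by (elim exE conjE)
  have "VF \<noteq> {}" using cV by auto
  then obtain a where a: "a \<in> VF" by blast
  have same: "f x div t = f a div t" if x: "x \<in> VF" for x
  proof -
    have "(adj VF EF)\<^sup>*\<^sup>* a x" using c a x by (simp add: connected_graph_def reachable_iff)
    then show ?thesis
    proof (induction rule: rtranclp_induct)
      case base then show ?case by simp
    next
      case (step y z)
      then have "{y,z} \<in> EF" by (simp add: adj_def)
      then have "{f y, f z} \<in> blkE t n" using f(3) by simp
      then have "f y div t = f z div t" by (simp add: blkE_mem)
      then show ?case using step.IH by simp
    qed
  qed
  let ?b = "f a div t"
  have "f ` VF \<subseteq> {?b*t..<?b*t+t}"
  proof
    fix y assume "y \<in> f ` VF"
    then obtain x where x: "x \<in> VF" "y = f x" by blast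
    then show "y \<in> {?b*t..<?b*t+t}" using same[OF x(1)] div_block[OF t, of "f x" ?b] by simp
  qed
  then have "card (f ` VF) \<le> t" using card_mono[of "{?b*t..<?b*t+t}" "f ` VF"] by simp
  moreover have "card (f ` VF) = t + 1" using card_image[OF f(1)] cV by simp
  ultimately show False by simp
qed

lemma blk_card:
  assumes t: "0 < t"
  shows "card (blkE t n) \<le> n * t"
proof -
  let ?S = "SIGMA x:{0..<n}. {x div t * t..<x div t * t + t}"
  have "blkE t n \<subseteq> (\<lambda>p. {fst p, snd p}) ` ?S"
  proof
    fix e assume "e \<in> blkE t n"
    then have "\<exists>x y. e = {x,y} \<and> x < n \<and> y < n \<and> x \<noteq> y \<and> x div t = y div t" by (rule blkE_elem)
    then obtain x y where xy: "e = {x,y}" "x < n" "y < n" "x \<noteq> y" "x div t = y div t" by (elim exE conjE)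
    have "y \<in> {x div t * t..<x div t * t + t}" using div_block[OF t, of y "x div t"] xy(5) by simp
    then have "(x,y) \<in> ?S" using xy(2) by simp
    then show "e \<in> (\<lambda>p. {fst p, snd p}) ` ?S" using xy(1) by (intro image_eqI[of _ _ "(x,y)"]) simp_all
  qed
  then have "card (blkE t n) \<le> card ((\<lambda>p. {fst p, snd p}) ` ?S)" by (rule card_mono[rotated]) simp
  also have "\<dots> \<le> card ?S" by (rule card_image_le) simp
  also have "\<dots> = (\<Sum>x\<in>{0..<n}. t)" by (simp add: card_SigmaI)
  also have "\<dots> = n * t" by simp
  finally show ?thesis .
qed

lemma blk_sat:
  assumes F: "graph VF EF" and eE: "{a,b} \<in> EF" and nr: "\<not> reachable VF (EF - {{a,b}}) a b"
    and cV: "card VF = t + 1" and t: "0 < t"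
    and uv: "u < q*t" "v < q*t" "u \<noteq> v" "{u,v} \<notin> blkE t (q*t)"
  shows "contains_copy {0..<q*t} (insert {u,v} (blkE t (q*t))) VF EF"
proof -
  let ?E' = "EF - {{a,b}}"
  have ab: "a \<in> VF" "b \<in> VF" "a \<noteq> b" using graph_edge[OF F eE] by simp_all
  have fV: "finite VF" using F by (simp add: graph_def)
  have duv: "u div t \<noteq> v div t" using uv by (simp add: blkE_mem)
  define F1 where "F1 = {x \<in> VF. reachable VF ?E' a x}"
  define F2 where "F2 = VF - F1"
  have aF1: "a \<in> F1" unfolding F1_def using ab(1) reachable_refl[of a VF ?E'] by simp
  have bF1: "b \<notin> F1" unfolding F1_def using nr by simp
  have bF2: "b \<in> F2" unfolding F2_def using bF1 ab(2) by simp
  have F1V: "F1 \<subseteq> VF" unfolding F1_def by auto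
  have closed: "y \<in> F1" if xy: "x \<in> F1" "{x,y} \<in> EF" "{x,y} \<noteq> {a,b}" for x y
  proof -
    have xyV: "x \<in> VF" "y \<in> VF" using graph_edge[OF F xy(2)] by simp_all
    have "(adj VF ?E')\<^sup>*\<^sup>* a x" using xy(1) unfolding F1_def by (simp add: reachable_iff)
    moreover have "adj VF ?E' x y" using xy xyV by (simp add: adj_def)
    ultimately have "(adj VF ?E')\<^sup>*\<^sup>* a y" by (rule rtranclp.rtrancl_into_rtrancl)
    then show ?thesis unfolding F1_def using ab(1) xyV(2) by (simp add: reachable_iff)
  qed
  have closed2: "x \<in> F1" if xy: "y \<in> F1" "{x,y} \<in> EF" "{x,y} \<noteq> {a,b}" for x y
    using closed[of y x] xy by (simp add: insert_commute)
  define Bu where "Bu = {u div t * t..<u div t * t + t}"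
  define Bv where "Bv = {v div t * t..<v div t * t + t}"
  have uBu: "u \<in> Bu" unfolding Bu_def using div_block[OF t, of u "u div t"] by simp
  have vBv: "v \<in> Bv" unfolding Bv_def using div_block[OF t, of v "v div t"] by simp
  have Bun: "Bu \<subseteq> {0..<q*t}" unfolding Bu_def
    by (rule block_sub) (use uv(1) in \<open>simp add: less_mult_imp_div_less\<close>)
  have Bvn: "Bv \<subseteq> {0..<q*t}" unfolding Bv_def
    by (rule block_sub) (use uv(2) in \<open>simp add: less_mult_imp_div_less\<close>)
  have divBu: "x div t = u div t" if "x \<in> Bu" for x using that div_block[OF t, of x "u div t"] by (simp add: Bu_def)
  have divBv: "x div t = v div t" if "x \<in> Bv" for x using that div_block[OF t, of x "v div t"] by (simp add: Bv_def)
  have cBu: "card (Bu - {u}) = t - 1" using uBu by (simp add: Bu_def)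
  have cBv: "card (Bv - {v}) = t - 1" using vBv by (simp add: Bv_def)
  have cF1: "card (F1 - {a}) \<le> t - 1"
  proof -
    have "F1 \<subseteq> VF - {b}" using F1V bF1 by blast
    then have "card F1 \<le> card (VF - {b})" using fV by (intro card_mono) simp_all
    also have "\<dots> = t" using cV ab(2) fV by simp
    finally show ?thesis using aF1 by simp
  qed
  have cF2: "card (F2 - {b}) \<le> t - 1"
  proof -
    have "F2 \<subseteq> VF - {a}" using aF1 unfolding F2_def by blast
    then have "card F2 \<le> card (VF - {a})" using fV by (intro card_mono) simp_all
    also have "\<dots> = t" using cV ab(1) fV by simp
    finally show ?thesis using bF2 by simp
  qed
  have fF1: "finite (F1 - {a})" using fV F1V by (meson finite_Diff finite_subset)
  have fF2: "finite (F2 - {b})" using fV unfolding F2_def by simp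
  obtain g1 where g1: "g1 ` (F1 - {a}) \<subseteq> Bu - {u}" "inj_on g1 (F1 - {a})"
    using card_le_inj[OF fF1, of "Bu - {u}"] cF1 cBu by (auto simp: Bu_def)
  obtain g2 where g2: "g2 ` (F2 - {b}) \<subseteq> Bv - {v}" "inj_on g2 (F2 - {b})"
    using card_le_inj[OF fF2, of "Bv - {v}"] cF2 cBv by (auto simp: Bv_def)
  define f where "f x = (if x = a then u else if x = b then v else if x \<in> F1 then g1 x else g2 x)" for x
  have fa: "f a = u" by (simp add: f_def)
  have fb: "f b = v" using ab(3) by (simp add: f_def)
  have fg1: "f x = g1 x \<and> f x \<in> Bu - {u}" if "x \<in> F1" "x \<noteq> a" for x
  proof -
    have "x \<noteq> b" using that bF1 by blast
    then have "f x = g1 x" using that by (simp add: f_def)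
    moreover have "g1 x \<in> Bu - {u}" using g1(1) that by blast
    ultimately show ?thesis by simp
  qed
  have fg2: "f x = g2 x \<and> f x \<in> Bv - {v}" if "x \<in> F2" "x \<noteq> b" for x
  proof -
    have "x \<noteq> a" "x \<notin> F1" using that aF1 unfolding F2_def by blast+
    then have "f x = g2 x" using that by (simp add: f_def)
    moreover have "g2 x \<in> Bv - {v}" using g2(1) that by blast
    ultimately show ?thesis by simp
  qed
  have fB1: "f x \<in> Bu" if "x \<in> F1" for x
    using fg1[OF that] fa uBu by (cases "x = a") auto
  have fB2: "f x \<in> Bv" if "x \<in> F2" for x
    using fg2[OF that] fb vBv by (cases "x = b") auto
  have disj: "p \<noteq> r" if "p \<in> Bu" "r \<in> Bv" for p r
    using divBu[OF that(1)] divBv[OF that(2)] duv by auto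
  have F12: "x \<in> F1 \<or> x \<in> F2" if "x \<in> VF" for x using that unfolding F2_def by blast
  have inj1: "x = y" if "x \<in> F1" "y \<in> F1" "f x = f y" for x y
  proof (cases "x = a")
    case True
    show ?thesis
    proof (rule ccontr)
      assume "x \<noteq> y"
      then have "y \<noteq> a" using True by simp
      then have "f y \<in> Bu - {u}" using fg1 that(2) by blast
      then show False using that(3) True fa by simp
    qed
  next
    case False
    show ?thesis
    proof (cases "y = a")
      case True
      have "f x \<in> Bu - {u}" using fg1 that(1) False by blast
      then show ?thesis using that(3) True fa by simp
    next
      case False2: False
      have "g1 x = g1 y" using fg1[OF that(1) False] fg1[OF that(2) False2] that(3) by simp
      then show ?thesis using g1(2) that(1,2) False False2 by (auto dest: inj_onD)
    qed
  qed
  have inj2: "x = y" if "x \<in> F2" "y \<in> F2" "f x = f y" for x y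
  proof (cases "x = b")
    case True
    show ?thesis
    proof (rule ccontr)
      assume "x \<noteq> y"
      then have "y \<noteq> b" using True by simp
      then have "f y \<in> Bv - {v}" using fg2 that(2) by blast
      then show False using that(3) True fb by simp
    qed
  next
    case False
    show ?thesis
    proof (cases "y = b")
      case True
      have "f x \<in> Bv - {v}" using fg2 that(1) False by blast
      then show ?thesis using that(3) True fb by simp
    next
      case False2: False
      have "g2 x = g2 y" using fg2[OF that(1) False] fg2[OF that(2) False2] that(3) by simp
      then show ?thesis using g2(2) that(1,2) False False2 by (auto dest: inj_onD)
    qed
  qed
  have inj: "inj_on f VF"
  proof (rule inj_onI)
    fix x y assume xy: "x \<in> VF" "y \<in> VF" "f x = f y"
    show "x = y"
    proof (cases "x \<in> F1")
      case True
      show ?thesis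
      proof (cases "y \<in> F1")
        case True2: True
        show ?thesis by (rule inj1[OF True True2 xy(3)])
      next
        case False
        then have y2: "y \<in> F2" using xy(2) unfolding F2_def by blast
        show ?thesis using disj[OF fB1[OF True] fB2[OF y2]] xy(3) by simp
      qed
    next
      case False
      then have x2: "x \<in> F2" using xy(1) unfolding F2_def by blast
      show ?thesis
      proof (cases "y \<in> F1")
        case True
        then show ?thesis using disj[OF fB1[OF True] fB2[OF x2]] xy(3) by simp
      next
        case False2: False
        then have "y \<in> F2" using xy(2) unfolding F2_def by blast
        then show ?thesis by (rule inj2[OF x2 _ xy(3)])
      qed
    qed
  qed
  have img: "f ` VF \<subseteq> {0..<q*t}"
  proof
    fix z assume "z \<in> f ` VF"
    then obtain x where x: "x \<in> VF" "z = f x" by blast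
    show "z \<in> {0..<q*t}"
    proof (cases "x \<in> F1")
      case True then show ?thesis using fB1 Bun x(2) by blast
    next
      case False then have "x \<in> F2" using x(1) unfolding F2_def by blast
      then show ?thesis using fB2 Bvn x(2) by blast
    qed
  qed
  have edges: "\<forall>x y. {x, y} \<in> EF \<longrightarrow> {f x, f y} \<in> insert {u,v} (blkE t (q*t))"
  proof (intro allI impI)
    fix x y assume xyE: "{x,y} \<in> EF"
    have xyV: "x \<in> VF" "y \<in> VF" "x \<noteq> y" using graph_edge[OF F xyE] by simp_all
    show "{f x, f y} \<in> insert {u,v} (blkE t (q*t))"
    proof (cases "{x,y} = {a,b}")
      case True
      have "{f x, f y} = f ` {x,y}" by simp
      also have "\<dots> = f ` {a,b}" using True by simp
      also have "\<dots> = {u,v}" using fa fb by simp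
      finally show ?thesis by simp
    next
      case False
      have fne: "f x \<noteq> f y" using inj xyV by (meson inj_onD)
      show ?thesis
      proof (cases "x \<in> F1")
        case True
        then have "y \<in> F1" using closed xyE False by blast
        then have "f x \<in> Bu" "f y \<in> Bu" using fB1 True by blast+
        then have "f x < q*t" "f y < q*t" "f x div t = f y div t" using Bun divBu by auto
        then show ?thesis using fne by (simp add: blkE_mem)
      next
        case False2: False
        then have "y \<notin> F1" using closed2[of y x] xyE False by blast
        then have "x \<in> F2" "y \<in> F2" using False2 xyV unfolding F2_def by blast+
        then have "f x \<in> Bv" "f y \<in> Bv" using fB2 by blast+
        then have "f x < q*t" "f y < q*t" "f x div t = f y div t" using Bvn divBv by auto
        then show ?thesis using fne by (simp add: blkE_mem)
      qed
    qed
  qed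
  show ?thesis unfolding contains_copy_def
    by (rule exI[of _ f]) (use inj img edges in blast)
qed

lemma liminf_big:
  assumes F: "graph VF EF" and sc: "short_cond VF EF L" and L: "L \<ge> 1"
  shows "\<not> (Liminf (rsat_filter VF EF) (\<lambda>n. ereal (real (rsat n VF EF) / real n)) \<le> ereal c)"
proof
  assume le: "Liminf (rsat_filter VF EF) (\<lambda>n. ereal (real (rsat n VF EF) / real n)) \<le> ereal c"
  define K where "K = nat \<lceil>c\<rceil> + 1"
  have Kc: "real K > c" unfolding K_def by linarith
  have ev: "eventually (\<lambda>n. ereal (real K) \<le> ereal (real (rsat n VF EF) / real n)) (rsat_filter VF EF)"
    unfolding rsat_filter_def eventually_inf_principal eventually_sequentially
  proof (intro exI[of _ "(2*K)^L + 1"] allI impI)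
    fix n assume n: "(2*K)^L + 1 \<le> n" and def: "n \<in> {n. rsat_defined n VF EF}"
    obtain E where En: "E \<in> rsat_graphs n VF EF" and r: "rsat n VF EF = card E"
      using rsat_attained[of n VF EF] def by auto
    have n1: "n \<ge> 1" using n by simp
    obtain d where d: "n \<le> (d+1)^L" "n*d \<le> 2*card E" using rsat_lower[OF F sc L En n1] by blast
    have dK: "2*K \<le> d"
    proof (rule ccontr)
      assume "\<not> 2*K \<le> d"
      then have "d + 1 \<le> 2*K" by simp
      then have "(d+1)^L \<le> (2*K)^L" by (rule power_mono) simp
      then show False using d(1) n by simp
    qed
    have h: "n * (2*K) \<le> n * d" using dK by (rule mult_left_mono) simp
    have "n * (2*K) \<le> 2 * card E" using h d(2) by (rule le_trans)
    then have "2 * (n * K) \<le> 2 * card E" by (simp only: mult.left_commute)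
    then have "n * K \<le> card E" by simp
    then have "real n * real K \<le> real (card E)" by (simp only: of_nat_mult[symmetric] of_nat_le_iff)
    then have "real K \<le> real (card E) / real n" using n1 by (simp add: pos_le_divide_eq mult.commute)
    then show "ereal (real K) \<le> ereal (real (rsat n VF EF) / real n)" using r by simp
  qed
  have "ereal (real K) \<le> Liminf (rsat_filter VF EF) (\<lambda>n. ereal (real (rsat n VF EF) / real n))"
    by (rule Liminf_bounded[OF ev])
  then have "ereal (real K) \<le> ereal c" using le by (rule order_trans)
  then show False using Kc by simp
qed

lemma liminf_small:
  assumes F: "graph VF EF" and c: "connected_graph VF EF" and eE: "{a,b} \<in> EF"
    and nr: "\<not> reachable VF (EF - {{a,b}}) a b"
  shows "Liminf (rsat_filter VF EF) (\<lambda>n. ereal (real (rsat n VF EF) / real n)) \<le> ereal (real (card VF - 1))"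
proof -
  define t where "t = card VF - 1"
  have ab: "a \<in> VF" "b \<in> VF" "a \<noteq> b" using graph_edge[OF F eE] by simp_all
  have fV: "finite VF" using F by (simp add: graph_def)
  have "card {a,b} \<le> card VF" using ab fV by (intro card_mono) simp_all
  then have c2: "card VF \<ge> 2" using ab(3) by simp
  then have cV: "card VF = t + 1" and t: "0 < t" unfolding t_def by simp_all
  have mem: "blkE t (q*t) \<in> rsat_graphs (q*t) VF EF" for q
    unfolding rsat_graphs_def
  proof (intro CollectI conjI)
    show "graph {0..<q*t} (blkE t (q*t))" by (rule blk_graph)
    show "regular {0..<q*t} (blkE t (q*t))" unfolding regular_def
      using blk_degree[OF t] by auto
    show "saturated {0..<q*t} (blkE t (q*t)) VF EF" unfolding saturated_def
    proof (intro conjI ballI impI)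
      show "\<not> contains_copy {0..<q*t} (blkE t (q*t)) VF EF" by (rule blk_free[OF t c cV])
      fix u v assume "u \<in> {0..<q*t}" "v \<in> {0..<q*t}" "u \<noteq> v \<and> {u, v} \<notin> blkE t (q*t)"
      then show "contains_copy {0..<q*t} (insert {u, v} (blkE t (q*t))) VF EF"
        using blk_sat[OF F eE nr cV t] by simp
    qed
  qed
  have rle: "rsat (q*t) VF EF \<le> q*t*t" for q
  proof -
    have "rsat (q*t) VF EF \<le> card (blkE t (q*t))"
      unfolding rsat_def using mem[of q] by (simp add: Inf_nat_def Least_le)
    also have "\<dots> \<le> q*t*t" by (rule blk_card[OF t])
    finally show ?thesis .
  qed
  have def: "rsat_defined (q*t) VF EF" for q using mem[of q] by (auto simp: rsat_defined_def)
  show ?thesis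
    unfolding Liminf_def
  proof (rule SUP_least)
    fix P assume "P \<in> {P. eventually P (rsat_filter VF EF)}"
    then have "eventually P (rsat_filter VF EF)" by simp
    then obtain N where N: "\<forall>n\<ge>N. n \<in> {n. rsat_defined n VF EF} \<longrightarrow> P n"
      unfolding rsat_filter_def eventually_inf_principal eventually_sequentially by blast
    define n where "n = (N+1)*t"
    have nN: "N \<le> n" unfolding n_def using t by (metis le_add1 le_trans mult_le_mono2 mult.commute nat_mult_1 Suc_leI add.commute plus_1_eq_Suc)
    have Pn: "P n" using N nN def[of "N+1"] unfolding n_def by blast
    have "n > 0" unfolding n_def using t by simp
    then have npos: "real n > 0" by simp
    have "rsat n VF EF \<le> n * t" unfolding n_def by (rule rle)
    then have "real (rsat n VF EF) \<le> real n * real t" by (simp only: of_nat_mult[symmetric] of_nat_le_iff)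
    then have "real (rsat n VF EF) / real n \<le> real t" using npos by (simp add: divide_le_eq mult.commute)
    then have "ereal (real (rsat n VF EF) / real n) \<le> ereal (real t)" by simp
    then show "(INF x\<in>{x. P x}. ereal (real (rsat x VF EF) / real x)) \<le> ereal (real (card VF - 1))"
      unfolding t_def using Pn by (intro INF_lower2[of n]) simp_all
  qed
qed

theorem proposition1p2:
  fixes VF :: "'b set" and EF :: "'b set set"
  assumes F: "graph VF EF"
  shows
   "(\<forall>m::nat. m \<ge> 1 \<longrightarrow>
       (\<forall>e\<in>EF. \<exists>k\<le>m + 1. in_cycle_of_length EF e k) \<longrightarrow>
       (\<lambda>n. real (rsat n VF EF)) \<in> \<Omega>[rsat_filter VF EF](\<lambda>n. real n powr (1 + 1 / real m)))
  \<and> (\<forall>r::nat. r \<ge> 1 \<longrightarrow>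
       (\<forall>e\<in>EF. diameter VF (EF - {e}) \<le> enat r) \<longrightarrow>
       (\<lambda>n. real (rsat n VF EF)) \<in> \<Omega>[rsat_filter VF EF](\<lambda>n. real n powr (1 + 1 / real r)))
  \<and> (connected_graph VF EF \<longrightarrow>
       ((\<exists>c::real. Liminf (rsat_filter VF EF) (\<lambda>n. ereal (real (rsat n VF EF) / real n)) \<le> ereal c)
        \<longleftrightarrow> (\<exists>e\<in>EF. cut_edge VF EF e)))"
proof (intro conjI allI impI)
  fix m :: nat assume m: "m \<ge> 1" and cyc: "\<forall>e\<in>EF. \<exists>k\<le>m + 1. in_cycle_of_length EF e k"
  show "(\<lambda>n. real (rsat n VF EF)) \<in> \<Omega>[rsat_filter VF EF](\<lambda>n. real n powr (1 + 1 / real m))"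
    by (rule omega_bound[OF F cycle_short[OF F cyc] m])
next
  fix r :: nat assume r: "r \<ge> 1" and dm: "\<forall>e\<in>EF. diameter VF (EF - {e}) \<le> enat r"
  show "(\<lambda>n. real (rsat n VF EF)) \<in> \<Omega>[rsat_filter VF EF](\<lambda>n. real n powr (1 + 1 / real r))"
    by (rule omega_bound[OF F diam_short[OF F dm] r])
next
  assume c: "connected_graph VF EF"
  show "(\<exists>c::real. Liminf (rsat_filter VF EF) (\<lambda>n. ereal (real (rsat n VF EF) / real n)) \<le> ereal c)
        \<longleftrightarrow> (\<exists>e\<in>EF. cut_edge VF EF e)"
  proof
    assume "\<exists>c::real. Liminf (rsat_filter VF EF) (\<lambda>n. ereal (real (rsat n VF EF) / real n)) \<le> ereal c"
    then obtain c0 :: real where le: "Liminf (rsat_filter VF EF) (\<lambda>n. ereal (real (rsat n VF EF) / real n)) \<le> ereal c0"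
      by blast
    show "\<exists>e\<in>EF. cut_edge VF EF e"
    proof (rule ccontr)
      assume nc: "\<not> (\<exists>e\<in>EF. cut_edge VF EF e)"
      obtain L where L: "L \<ge> 1" "short_cond VF EF L" using bridgeless_short[OF F c nc] by blast
      show False using liminf_big[OF F L(2) L(1), of c0] le by simp
    qed
  next
    assume "\<exists>e\<in>EF. cut_edge VF EF e"
    then obtain e where eE: "e \<in> EF" and cut: "cut_edge VF EF e" by blast
    have "\<exists>u v. e = {u,v} \<and> u \<noteq> v \<and> u \<in> VF \<and> v \<in> VF" by (rule graph_edgeE[OF F eE])
    then obtain a b where ab: "e = {a,b}" by blast
    have nr: "\<not> reachable VF (EF - {{a,b}}) a b" using unreach_if_cut[OF F c] cut ab by simp
    have "{a,b} \<in> EF" using eE ab by simp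
    then show "\<exists>c::real. Liminf (rsat_filter VF EF) (\<lambda>n. ereal (real (rsat n VF EF) / real n)) \<le> ereal c"
      using liminf_small[OF F c _ nr] by blast
  qed
qed


end
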